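(* Let $(\chi_n)_{n\in\mathbb N}$ be independent Bernoulli random variables with $\mathbb P(\chi_n=1)=p\in(0,1)$. Let $N\ge1$ and let $c$ be a finitely supported real function on the set of multi-indices $\alpha=(\alpha_1,\dots,\alpha_N)\in\mathbb N^N$ with $1\le\alpha_1<\dots<\alpha_N$. Set $\Psi_N(c^2)=\sum_{|\alpha|=N}c(\alpha)^2\chi^\alpha$ with $\chi^\alpha=\prod_{i=1}^N\chi_{\alpha_i}$, $|c|_N^2=\sum_{|\alpha|=N}c(\alpha)^2$ and $\delta_N^2(c)=\max_n\sum_{|\alpha|=N,\,n\in\{\alpha_1,\dots,\alpha_N\}}c(\alpha)^2$, and assume $\delta_N(c)>0$. If $x<(p/2)^N|c|_N^2$, then $$\mathbb P(\Psi_N(c^2)\le x)\le\frac{2e^3}{9}N\exp\Big(-\frac{x^2}{\delta_N^2(c)|c|_N^2}\Big).$$ *)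

theory Defs
  imports "HOL-Probability.Probability"
begin

text \<open>Multi-indices 1 \<le> a_1 < ... < a_N are identified with their (finite) sets of
entries: subsets of {1,2,...} of cardinality N.\<close>
definition multi_idx :: "nat \<Rightarrow> nat set set" where
  "multi_idx N = {\<alpha>. finite \<alpha> \<and> card \<alpha> = N \<and> 0 \<notin> \<alpha>}"

definition supp_c :: "nat \<Rightarrow> (nat set \<Rightarrow> real) \<Rightarrow> nat set set" where
  "supp_c N c = {\<alpha> \<in> multi_idx N. c \<alpha> \<noteq> 0}"

definition chi_pow :: "(nat \<Rightarrow> 'a \<Rightarrow> real) \<Rightarrow> nat set \<Rightarrow> 'a \<Rightarrow> real" where
  "chi_pow X \<alpha> \<omega> = (\<Prod>i\<in>\<alpha>. X i \<omega>)"

definition Psi :: "nat \<Rightarrow> (nat set \<Rightarrow> real) \<Rightarrow> (nat \<Rightarrow> 'a \<Rightarrow> real) \<Rightarrow> 'a \<Rightarrow> real" where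
  "Psi N c X \<omega> = (\<Sum>\<alpha>\<in>supp_c N c. (c \<alpha>)\<^sup>2 * chi_pow X \<alpha> \<omega>)"

definition cnorm2 :: "nat \<Rightarrow> (nat set \<Rightarrow> real) \<Rightarrow> real" where
  "cnorm2 N c = (\<Sum>\<alpha>\<in>supp_c N c. (c \<alpha>)\<^sup>2)"

definition delta2 :: "nat \<Rightarrow> (nat set \<Rightarrow> real) \<Rightarrow> real" where
  "delta2 N c = Max (range (\<lambda>n. \<Sum>\<alpha>\<in>{\<alpha>\<in>supp_c N c. n \<in> \<alpha>}. (c \<alpha>)\<^sup>2))"

end

theory Submission
  imports Defs
begin

lemma two_point:
  fixes p h :: real
  assumes "0 \<le> p" "p \<le> 1"
  shows "p * exp ((1-p)*h) + (1-p) * exp (-p*h) \<le> exp (h\<^sup>2/8)"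
proof -
  have key: "q * exp ((1-q)*g) + (1-q) * exp (-q*g) \<le> exp (g\<^sup>2/8)"
    if q: "0 \<le> q" "q \<le> 1" and g: "g \<ge> 0" for q g :: real
  proof -
    have pos: "1 + q * (exp g - 1) > 0"
      using q g by (intro add_pos_nonneg mult_nonneg_nonneg) auto
    have "-g*q + ln (1 + q * (exp g - 1)) \<le> g\<^sup>2/8"
      using Hoeffdings_lemma_aux[of g q] q g by simp
    hence "ln (1 + q * (exp g - 1)) \<le> g\<^sup>2/8 + g*q" by linarith
    hence "1 + q * (exp g - 1) \<le> exp (g\<^sup>2/8 + g*q)"
      using pos by (metis exp_le_cancel_iff exp_ln)
    hence "exp (-q*g) * (1 + q * (exp g - 1)) \<le> exp (-q*g) * exp (g\<^sup>2/8 + g*q)"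
      by (intro mult_left_mono) auto
    also have "\<dots> = exp (g\<^sup>2/8)" by (simp add: exp_add[symmetric] algebra_simps)
    also have "exp (-q*g) * (1 + q * (exp g - 1)) = q * exp ((1-q)*g) + (1-q) * exp (-q*g)"
      by (simp add: algebra_simps exp_add[symmetric] exp_diff)
    finally show ?thesis .
  qed
  show ?thesis
  proof (cases "h \<ge> 0")
    case True thus ?thesis using key[of p h] assms by simp
  next
    case False
    have "(1-p) * exp ((1-(1-p))*(-h)) + (1-(1-p)) * exp (-(1-p)*(-h)) \<le> exp ((-h)\<^sup>2/8)"
      using key[of "1-p" "-h"] assms False by simp
    thus ?thesis by (simp add: algebra_simps)
  qed
qed

definition wt :: "real \<Rightarrow> nat \<Rightarrow> nat set \<Rightarrow> real" where
  "wt p m T = (\<Prod>i\<in>{1..m}. if i \<in> T then p else 1 - p)"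

definition Ex :: "real \<Rightarrow> nat \<Rightarrow> (nat set \<Rightarrow> real) \<Rightarrow> real" where
  "Ex p m H = (\<Sum>T\<in>Pow {1..m}. wt p m T * H T)"

lemma Ex_0: "Ex p 0 H = H {}"
  by (simp add: Ex_def wt_def)

lemma Ex_Suc: "Ex p (Suc m) H = Ex p m (\<lambda>T. p * H (insert (Suc m) T) + (1-p) * H T)"
proof -
  have iv: "{1..Suc m} = insert (Suc m) {1..m}" by auto
  have nin: "Suc m \<notin> {1..m}" by simp
  have inj: "inj_on (insert (Suc m)) (Pow {1..m})"
    by (rule inj_onI) (auto, (metis insert_iff subsetD atLeastAtMost_iff not_less_eq_eq order_refl Set.set_insert insertE)+)
  have w1: "wt p (Suc m) T = (1-p) * wt p m T" if "T \<subseteq> {1..m}" for T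
  proof -
    have "Suc m \<notin> T" using that by auto
    thus ?thesis by (simp add: wt_def iv prod.insert)
  qed
  have w2: "wt p (Suc m) (insert (Suc m) T) = p * wt p m T" if "T \<subseteq> {1..m}" for T
  proof -
    have "wt p (Suc m) (insert (Suc m) T) = p * (\<Prod>i\<in>{1..m}. if i \<in> insert (Suc m) T then p else 1 - p)"
      by (simp add: wt_def iv prod.insert)
    also have "(\<Prod>i\<in>{1..m}. if i \<in> insert (Suc m) T then p else 1 - p) = wt p m T"
      unfolding wt_def by (intro prod.cong) auto
    finally show ?thesis .
  qed
  have "Ex p (Suc m) H = (\<Sum>T\<in>Pow {1..m}. wt p (Suc m) T * H T)
          + (\<Sum>T\<in>insert (Suc m) ` Pow {1..m}. wt p (Suc m) T * H T)"
    unfolding Ex_def iv Pow_insert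
    by (rule sum.union_disjoint) auto
  also have "(\<Sum>T\<in>insert (Suc m) ` Pow {1..m}. wt p (Suc m) T * H T)
      = (\<Sum>T\<in>Pow {1..m}. wt p (Suc m) (insert (Suc m) T) * H (insert (Suc m) T))"
    by (subst sum.reindex[OF inj]) simp
  also have "\<dots> = (\<Sum>T\<in>Pow {1..m}. wt p m T * (p * H (insert (Suc m) T)))"
    by (intro sum.cong) (auto simp: w2)
  also have "(\<Sum>T\<in>Pow {1..m}. wt p (Suc m) T * H T) = (\<Sum>T\<in>Pow {1..m}. wt p m T * ((1-p) * H T))"
    by (intro sum.cong) (auto simp: w1)
  finally show ?thesis
    unfolding Ex_def by (simp add: sum.distrib[symmetric] algebra_simps)
qed

lemma Ex_cong: "(\<And>T. T \<subseteq> {1..m} \<Longrightarrow> H T = G T) \<Longrightarrow> Ex p m H = Ex p m G"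
  unfolding Ex_def by (intro sum.cong) auto

lemma wt_nonneg: "0 \<le> p \<Longrightarrow> p \<le> 1 \<Longrightarrow> 0 \<le> wt p m T"
  unfolding wt_def by (intro prod_nonneg) auto

lemma Ex_mono: "0 \<le> p \<Longrightarrow> p \<le> 1 \<Longrightarrow> (\<And>T. T \<subseteq> {1..m} \<Longrightarrow> H T \<le> G T) \<Longrightarrow> Ex p m H \<le> Ex p m G"
  unfolding Ex_def by (intro sum_mono mult_left_mono wt_nonneg) auto

lemma Ex_const: "Ex p m (\<lambda>_. c) = c"
  by (induction m) (simp_all add: Ex_0 Ex_Suc algebra_simps)

lemma Ex_lin: "Ex p m (\<lambda>T. a * H T + b * G T) = a * Ex p m H + b * Ex p m G"
  unfolding Ex_def by (simp add: sum.distrib sum_distrib_left algebra_simps)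

lemma Ex_cmult: "Ex p m (\<lambda>T. a * H T) = a * Ex p m H"
  unfolding Ex_def by (simp add: sum_distrib_left algebra_simps)

lemma Ex_minus_const: "Ex p m (\<lambda>T. H T - c) = Ex p m H - c"
proof -
  have "Ex p m (\<lambda>T. 1 * H T + (-c) * 1) = 1 * Ex p m H + (-c) * Ex p m (\<lambda>_. 1)"
    by (rule Ex_lin)
  thus ?thesis by (simp add: Ex_const)
qed


lemma mcd:
  assumes p: "0 \<le> p" "p \<le> 1" and bd: "\<And>i T. i \<notin> T \<Longrightarrow> \<bar>H (insert i T) - H T\<bar> \<le> d i"
  shows "Ex p m (\<lambda>T. exp (l * (H T - Ex p m H))) \<le> exp (l\<^sup>2 * (\<Sum>i\<in>{1..m}. (d i)\<^sup>2) / 8)"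
  using bd
proof (induction m arbitrary: H)
  case 0
  then show ?case by (simp add: Ex_0)
next
  case (Suc m)
  define g where "g T = p * H (insert (Suc m) T) + (1-p) * H T" for T
  define c where "c = Ex p m g"
  have E: "Ex p (Suc m) H = c" unfolding c_def g_def by (rule Ex_Suc)
  have dnn: "0 \<le> d i" for i using Suc.prems[of i "{}"] by auto
  have gbd: "\<bar>g (insert i T) - g T\<bar> \<le> d i" if "i \<notin> T" for i T
  proof -
    have a: "\<bar>H (insert (Suc m) (insert i T)) - H (insert (Suc m) T)\<bar> \<le> d i"
    proof (cases "i = Suc m")
      case True thus ?thesis using dnn by simp
    next
      case False
      hence "i \<notin> insert (Suc m) T" using that by auto
      from Suc.prems[OF this] show ?thesis by (simp add: insert_commute)
    qed
    have b: "\<bar>H (insert i T) - H T\<bar> \<le> d i" using Suc.prems[OF that] .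
    have "g (insert i T) - g T = p * (H (insert (Suc m) (insert i T)) - H (insert (Suc m) T))
              + (1-p) * (H (insert i T) - H T)" unfolding g_def by (simp add: algebra_simps)
    hence "\<bar>g (insert i T) - g T\<bar> \<le> p * \<bar>H (insert (Suc m) (insert i T)) - H (insert (Suc m) T)\<bar>
              + (1-p) * \<bar>H (insert i T) - H T\<bar>"
      using p by (simp add: abs_triangle_ineq[THEN order_trans] abs_mult)
    also have "\<dots> \<le> p * d i + (1-p) * d i"
      using p a b by (intro add_mono mult_left_mono) auto
    finally show ?thesis by (simp add: algebra_simps)
  qed
  define D where "D = (d (Suc m))\<^sup>2"
  have "Ex p (Suc m) (\<lambda>T. exp (l * (H T - Ex p (Suc m) H)))
      = Ex p m (\<lambda>T. p * exp (l * (H (insert (Suc m) T) - c)) + (1-p) * exp (l * (H T - c)))"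
    unfolding E by (rule Ex_Suc)
  also have "\<dots> = Ex p m (\<lambda>T. exp (l * (g T - c)) *
       (p * exp ((1-p) * (l * (H (insert (Suc m) T) - H T))) + (1-p) * exp (-p * (l * (H (insert (Suc m) T) - H T)))))"
  proof (intro Ex_cong)
    fix T
    have 1: "exp (l * (H (insert (Suc m) T) - c)) = exp (l * (g T - c)) * exp ((1-p) * (l * (H (insert (Suc m) T) - H T)))"
      by (simp add: exp_add[symmetric] g_def algebra_simps)
    have 2: "exp (l * (H T - c)) = exp (l * (g T - c)) * exp (-p * (l * (H (insert (Suc m) T) - H T)))"
      by (simp add: exp_add[symmetric] g_def algebra_simps)
    show "p * exp (l * (H (insert (Suc m) T) - c)) + (1-p) * exp (l * (H T - c)) = exp (l * (g T - c)) *
       (p * exp ((1-p) * (l * (H (insert (Suc m) T) - H T))) + (1-p) * exp (-p * (l * (H (insert (Suc m) T) - H T))))"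
      unfolding 1 2 by (simp add: algebra_simps)
  qed
  also have "\<dots> \<le> Ex p m (\<lambda>T. exp (l * (g T - c)) * exp (l\<^sup>2 * D / 8))"
  proof (intro Ex_mono p mult_left_mono)
    fix T assume T: "T \<subseteq> {1..m}"
    hence "Suc m \<notin> T" by auto
    from Suc.prems[OF this] have h: "\<bar>H (insert (Suc m) T) - H T\<bar> \<le> d (Suc m)" .
    have "(H (insert (Suc m) T) - H T)\<^sup>2 \<le> D"
      unfolding D_def using h by (metis abs_ge_zero power2_abs power_mono)
    hence "(l * (H (insert (Suc m) T) - H T))\<^sup>2 / 8 \<le> l\<^sup>2 * D / 8"
      by (simp add: power_mult_distrib mult_left_mono)
    with two_point[OF p, of "l * (H (insert (Suc m) T) - H T)"]
    show "p * exp ((1-p) * (l * (H (insert (Suc m) T) - H T))) + (1-p) * exp (-p * (l * (H (insert (Suc m) T) - H T)))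
       \<le> exp (l\<^sup>2 * D / 8)"
      by (meson exp_le_cancel_iff order_trans)
  qed auto
  also have "\<dots> = exp (l\<^sup>2 * D / 8) * Ex p m (\<lambda>T. exp (l * (g T - Ex p m g)))"
    unfolding c_def by (subst Ex_cmult[symmetric]) (simp add: mult.commute)
  also have "\<dots> \<le> exp (l\<^sup>2 * D / 8) * exp (l\<^sup>2 * (\<Sum>i\<in>{1..m}. (d i)\<^sup>2) / 8)"
    using Suc.IH[of g] gbd by (intro mult_left_mono) auto
  also have "\<dots> = exp (l\<^sup>2 * (\<Sum>i\<in>{1..Suc m}. (d i)\<^sup>2) / 8)"
  proof -
    have iv: "{1..Suc m} = insert (Suc m) {1..m}" by auto
    show ?thesis unfolding iv D_def by (simp add: exp_add[symmetric] algebra_simps add_divide_distrib)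
  qed
  finally show ?case .
qed


lemma chernoff:
  assumes p: "0 \<le> p" "p \<le> 1" and bd: "\<And>i T. i \<notin> T \<Longrightarrow> \<bar>H (insert i T) - H T\<bar> \<le> d i"
    and D: "D = (\<Sum>i\<in>{1..m}. (d i)\<^sup>2)" "D > 0" and t: "t \<ge> 0"
  shows "Ex p m (\<lambda>T. if H T \<le> Ex p m H - t then 1 else 0) \<le> exp (- (2 * t\<^sup>2 / D))"
proof -
  define lam where "lam = 4 * t / D"
  have lam: "lam \<ge> 0" using t D by (simp add: lam_def)
  define E where "E = Ex p m H"
  have "Ex p m (\<lambda>T. if H T \<le> E - t then 1 else 0) \<le> Ex p m (\<lambda>T. exp (- lam * t) * exp ((-lam) * (H T - E)))"
  proof (intro Ex_mono p)
    fix T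
    show "(if H T \<le> E - t then 1 else 0) \<le> exp (- lam * t) * exp ((-lam) * (H T - E))"
    proof (cases "H T \<le> E - t")
      case True
      hence "lam * t \<le> lam * (E - H T)" using lam by (intro mult_left_mono) auto
      hence "0 \<le> - lam * t + (-lam) * (H T - E)" by (simp add: algebra_simps)
      hence "1 \<le> exp (- lam * t + (-lam) * (H T - E))" by simp
      also have "exp (- lam * t + (-lam) * (H T - E)) = exp (- lam * t) * exp ((-lam) * (H T - E))"
        by (rule exp_add)
      finally show ?thesis using True by simp
    qed simp
  qed
  also have "\<dots> = exp (- lam * t) * Ex p m (\<lambda>T. exp ((-lam) * (H T - E)))" by (rule Ex_cmult)
  also have "\<dots> \<le> exp (- lam * t) * exp ((-lam)\<^sup>2 * D / 8)"
    unfolding E_def D(1) by (intro mult_left_mono mcd p bd) auto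
  also have "\<dots> = exp (- (2 * t\<^sup>2 / D))"
    using D(2) by (simp add: exp_add[symmetric] lam_def power2_eq_square field_simps)
  finally show ?thesis unfolding E_def .
qed


context prob_space
begin

lemma config_prob:
  fixes X :: "nat \<Rightarrow> 'a \<Rightarrow> real"
  assumes ind: "indep_vars (\<lambda>_. borel) X {1..}"
    and v01: "\<And>n. n \<ge> 1 \<Longrightarrow> \<forall>\<omega>\<in>space M. X n \<omega> \<in> {0,1}"
    and pr: "\<And>n. n \<ge> 1 \<Longrightarrow> prob {\<omega>\<in>space M. X n \<omega> = 1} = p"
    and T: "T \<subseteq> {1..m}" and m: "m \<ge> 1"
  shows "prob {\<omega>\<in>space M. {i\<in>{1..m}. X i \<omega> = 1} = T} = wt p m T"
proof -
  define b where "b i = (if i \<in> T then 1 else 0::real)" for i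
  have rv: "X i \<in> borel_measurable M" if "i \<ge> 1" for i
    using ind that unfolding indep_vars_def2 by auto
  have ie: "indep_events (\<lambda>i. {\<omega>\<in>space M. X i \<omega> = b i}) {1..}"
    by (rule indep_eventsI_indep_vars[OF ind]) auto
  have set_eq: "{\<omega>\<in>space M. {i\<in>{1..m}. X i \<omega> = 1} = T} = (\<Inter>i\<in>{1..m}. {\<omega>\<in>space M. X i \<omega> = b i})"
  proof (intro equalityI subsetI)
    fix \<omega> assume "\<omega> \<in> {\<omega>\<in>space M. {i\<in>{1..m}. X i \<omega> = 1} = T}"
    hence w: "\<omega> \<in> space M" "{i\<in>{1..m}. X i \<omega> = 1} = T" by auto
    show "\<omega> \<in> (\<Inter>i\<in>{1..m}. {\<omega>\<in>space M. X i \<omega> = b i})"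
    proof (rule INT_I)
      fix i assume i: "i \<in> {1..m}"
      from v01[of i] i w(1) have "X i \<omega> \<in> {0,1}" by auto
      hence "X i \<omega> = b i" using w(2) i unfolding b_def by auto
      thus "\<omega> \<in> {\<omega>\<in>space M. X i \<omega> = b i}" using w(1) by simp
    qed
  next
    fix \<omega> assume a: "\<omega> \<in> (\<Inter>i\<in>{1..m}. {\<omega>\<in>space M. X i \<omega> = b i})"
    have "1 \<in> {1..m}" using m by auto
    with a have sp: "\<omega> \<in> space M" by blast
    have "{i\<in>{1..m}. X i \<omega> = 1} = T"
      using a T unfolding b_def by (auto split: if_splits)
    with sp show "\<omega> \<in> {\<omega>\<in>space M. {i\<in>{1..m}. X i \<omega> = 1} = T}" by auto
  qed
  have "prob (\<Inter>i\<in>{1..m}. {\<omega>\<in>space M. X i \<omega> = b i}) = (\<Prod>i\<in>{1..m}. prob {\<omega>\<in>space M. X i \<omega> = b i})"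
    using ie m unfolding indep_events_def by (auto)
  also have "\<dots> = wt p m T"
    unfolding wt_def
  proof (intro prod.cong refl)
    fix i assume i: "i \<in> {1..m}"
    show "prob {\<omega>\<in>space M. X i \<omega> = b i} = (if i \<in> T then p else 1 - p)"
    proof (cases "i \<in> T")
      case True thus ?thesis using pr i by (simp add: b_def)
    next
      case False
      have ev: "{\<omega>\<in>space M. X i \<omega> = 1} \<in> events" 
      proof -
        have "X i -` {1} \<inter> space M \<in> events" using rv i by (intro measurable_sets) auto
        moreover have "X i -` {1} \<inter> space M = {\<omega>\<in>space M. X i \<omega> = 1}" by auto
        ultimately show ?thesis by simp
      qed
      have "{\<omega>\<in>space M. X i \<omega> = b i} = space M - {\<omega>\<in>space M. X i \<omega> = 1}"
        using False v01 i unfolding b_def by auto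
      hence "prob {\<omega>\<in>space M. X i \<omega> = b i} = 1 - prob {\<omega>\<in>space M. X i \<omega> = 1}"
        using prob_compl[OF ev] by simp
      thus ?thesis using False pr i by simp
    qed
  qed
  finally show ?thesis using set_eq by simp
qed

end


lemma Ex_sum: "Ex p m (\<lambda>T. \<Sum>a\<in>A. f a T) = (\<Sum>a\<in>A. Ex p m (f a))"
  unfolding Ex_def by (simp add: sum_distrib_left sum.swap[of _ A])

lemma Ex_ind:
  assumes "\<alpha> \<subseteq> {1..m}"
  shows "Ex p m (\<lambda>T. if \<alpha> \<subseteq> T then 1 else 0) = p ^ card \<alpha>"
  using assms
proof (induction m arbitrary: \<alpha>)
  case 0
  hence "\<alpha> = {}" by auto
  thus ?case by (simp add: Ex_0)
next
  case (Suc m)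
  show ?case
  proof (cases "Suc m \<in> \<alpha>")
    case True
    define \<beta> where "\<beta> = \<alpha> - {Suc m}"
    have b: "\<beta> \<subseteq> {1..m}" using Suc.prems by (auto simp: \<beta>_def)
    have fin: "finite \<alpha>" using Suc.prems finite_subset by blast
    have ca: "card \<alpha> = Suc (card \<beta>)" using True fin unfolding \<beta>_def
      by (metis card_Suc_Diff1)
    have "Ex p (Suc m) (\<lambda>T. if \<alpha> \<subseteq> T then 1 else 0)
       = Ex p m (\<lambda>T. p * (if \<beta> \<subseteq> T then 1 else 0))"
      unfolding Ex_Suc
    proof (intro Ex_cong)
      fix T assume T: "T \<subseteq> {1..m}"
      hence "\<not> \<alpha> \<subseteq> T" using True by auto
      moreover have "(\<alpha> \<subseteq> insert (Suc m) T) = (\<beta> \<subseteq> T)" unfolding \<beta>_def using True by auto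
      ultimately show "p * (if \<alpha> \<subseteq> insert (Suc m) T then 1 else 0) + (1 - p) * (if \<alpha> \<subseteq> T then 1 else 0)
          = p * (if \<beta> \<subseteq> T then 1 else 0)" by simp
    qed
    also have "\<dots> = p ^ card \<alpha>" by (simp add: Ex_cmult Suc.IH[OF b] ca)
    finally show ?thesis .
  next
    case False
    hence a: "\<alpha> \<subseteq> {1..m}" using Suc.prems by (auto simp: le_Suc_eq)
    have "Ex p (Suc m) (\<lambda>T. if \<alpha> \<subseteq> T then 1 else 0) = Ex p m (\<lambda>T. if \<alpha> \<subseteq> T then 1 else 0)"
      unfolding Ex_Suc
    proof (intro Ex_cong)
      fix T assume T: "T \<subseteq> {1..m}"
      have "(\<alpha> \<subseteq> insert (Suc m) T) = (\<alpha> \<subseteq> T)" using False by auto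
      thus "p * (if \<alpha> \<subseteq> insert (Suc m) T then 1 else 0) + (1 - p) * (if \<alpha> \<subseteq> T then 1 else 0)
          = (if \<alpha> \<subseteq> T then 1 else 0)" by (simp add: algebra_simps)
    qed
    thus ?thesis using Suc.IH[OF a] by simp
  qed
qed

lemma Ex_ind_le: "Ex p m (\<lambda>T. if T \<in> P then 1 else 0) = (\<Sum>T\<in>{T\<in>Pow {1..m}. T \<in> P}. wt p m T)"
  unfolding Ex_def by (simp add: sum.inter_filter[symmetric] if_distrib cong: if_cong)


theorem lemmaA1:
  fixes M :: "'a measure" and X :: "nat \<Rightarrow> 'a \<Rightarrow> real"
    and p x :: real and N :: nat and c :: "nat set \<Rightarrow> real"
  assumes "prob_space M"
    and "prob_space.indep_vars M (\<lambda>_. borel) X {1..}"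
    and "\<And>n. n \<ge> 1 \<Longrightarrow> \<forall>\<omega>\<in>space M. X n \<omega> \<in> {0, 1}"
    and "\<And>n. n \<ge> 1 \<Longrightarrow> measure M {\<omega> \<in> space M. X n \<omega> = 1} = p"
    and "0 < p" and "p < 1"
    and "N \<ge> 1"
    and "finite (supp_c N c)"
    and "delta2 N c > 0"
    and "x < (p / 2) ^ N * cnorm2 N c"
  shows "measure M {\<omega> \<in> space M. Psi N c X \<omega> \<le> x}
           \<le> 2 * exp 3 / 9 * real N * exp (- (x\<^sup>2 / (delta2 N c * cnorm2 N c)))"
proof -
  interpret prob_space M by fact
  note ind = assms(2) and v01 = assms(3) and pr = assms(4)
  have p01: "0 \<le> p" "p \<le> 1" using assms(5,6) by auto
  define A where "A = supp_c N c"
  have finA: "finite A" using assms(8) by (simp add: A_def)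
  have Aprops: "finite \<alpha>" "card \<alpha> = N" "0 \<notin> \<alpha>" if "\<alpha> \<in> A" for \<alpha>
    using that by (auto simp: A_def supp_c_def multi_idx_def)
  have finU: "finite (\<Union>A)" using finA Aprops by auto
  define m where "m = Suc (Max (insert 0 (\<Union>A)))"
  have m1: "m \<ge> 1" by (simp add: m_def)
  have Asub: "\<alpha> \<subseteq> {1..m}" if "\<alpha> \<in> A" for \<alpha>
  proof
    fix i assume i: "i \<in> \<alpha>"
    have "i \<le> Max (insert 0 (\<Union>A))" using i that finU by (intro Max_ge) auto
    moreover have "i \<noteq> 0" using Aprops(3)[OF that] i by (metis gr0I)
    ultimately show "i \<in> {1..m}" by (simp add: m_def)
  qed
  define a where "a \<alpha> = (c \<alpha>)\<^sup>2" for \<alpha>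
  define F where "F T = (\<Sum>\<alpha>\<in>A. a \<alpha> * (if \<alpha> \<subseteq> T then 1 else 0))" for T
  define S where "S \<omega> = {i\<in>{1..m}. X i \<omega> = 1}" for \<omega>
  define d where "d n = (\<Sum>\<alpha>\<in>{\<alpha>\<in>A. n \<in> \<alpha>}. a \<alpha>)" for n
  define C where "C = cnorm2 N c"
  define \<delta> where "\<delta> = delta2 N c"
  have C_eq: "C = (\<Sum>\<alpha>\<in>A. a \<alpha>)" by (simp add: C_def cnorm2_def A_def a_def)
  have \<delta>_eq: "\<delta> = Max (range d)" by (simp add: \<delta>_def delta2_def d_def A_def a_def)
  have finrange: "finite (range d)"
  proof (rule finite_subset)
    show "range d \<subseteq> (\<lambda>B. \<Sum>\<alpha>\<in>B. a \<alpha>) ` Pow A" unfolding d_def by auto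
  qed (use finA in auto)
  have d_le: "d n \<le> \<delta>" for n unfolding \<delta>_eq using finrange by (intro Max_ge) auto
  have a_nn: "0 \<le> a \<alpha>" for \<alpha> by (simp add: a_def)
  have d_nn: "0 \<le> d n" for n unfolding d_def by (intro sum_nonneg a_nn)
  obtain n0 where n0: "\<delta> = d n0" using Max_in[OF finrange] \<delta>_eq by auto
  have dn0: "d n0 > 0" using assms(9) n0 \<delta>_def by simp
  then obtain \<alpha>0 where \<alpha>0: "\<alpha>0 \<in> A" "n0 \<in> \<alpha>0" unfolding d_def
    by (metis (no_types, lifting) empty_Collect_eq less_irrefl sum.empty)
  have n0m: "n0 \<in> {1..m}" using Asub[OF \<alpha>0(1)] \<alpha>0(2) by auto
  have C_ge: "d n0 \<le> C" unfolding C_eq d_def using finA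
    by (intro sum_mono2 a_nn) auto
  have Cpos: "C > 0" using C_ge dn0 by simp
  have \<delta>pos: "\<delta> > 0" using assms(9) \<delta>_def by simp

  have Psi_eq: "Psi N c X \<omega> = F (S \<omega>)" if w: "\<omega> \<in> space M" for \<omega>
    unfolding Psi_def F_def A_def[symmetric] a_def
  proof (intro sum.cong refl)
    fix \<alpha> assume al: "\<alpha> \<in> A"
    have "chi_pow X \<alpha> \<omega> = (if \<alpha> \<subseteq> S \<omega> then 1 else 0)"
    proof (cases "\<alpha> \<subseteq> S \<omega>")
      case True
      hence "\<forall>i\<in>\<alpha>. X i \<omega> = 1" by (auto simp: S_def)
      thus ?thesis using True unfolding chi_pow_def by simp
    next
      case False
      then obtain i where i: "i \<in> \<alpha>" "i \<notin> S \<omega>" by auto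
      have "i \<in> {1..m}" using Asub[OF al] i by auto
      hence "X i \<omega> = 0" using v01[of i] w i unfolding S_def by auto
      hence "chi_pow X \<alpha> \<omega> = 0" unfolding chi_pow_def using Aprops(1)[OF al] i
        by (intro prod_zero) auto
      thus ?thesis using False by simp
    qed
    thus "(c \<alpha>)\<^sup>2 * chi_pow X \<alpha> \<omega> = (c \<alpha>)\<^sup>2 * (if \<alpha> \<subseteq> S \<omega> then 1 else 0)" by simp
  qed
  have F_nn: "0 \<le> F T" for T unfolding F_def by (intro sum_nonneg) (auto simp: a_nn)

  have rv: "X i \<in> borel_measurable M" if "i \<ge> 1" for i
    using ind that unfolding indep_vars_def2 by auto
  have ev1: "{\<omega>\<in>space M. X i \<omega> = 1} \<in> events" if "i \<ge> 1" for i
  proof -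
    have "X i -` {1} \<inter> space M \<in> events" using rv that by (intro measurable_sets) auto
    moreover have "X i -` {1} \<inter> space M = {\<omega>\<in>space M. X i \<omega> = 1}" by auto
    ultimately show ?thesis by simp
  qed
  have evT: "{\<omega>\<in>space M. S \<omega> = T} \<in> events" for T
  proof (cases "T \<subseteq> {1..m}")
    case False
    hence "{\<omega>\<in>space M. S \<omega> = T} = {}" unfolding S_def by auto
    thus ?thesis by (metis sets.empty_sets)
  next
    case True
    have "{\<omega>\<in>space M. S \<omega> = T} = {\<omega>\<in>space M. \<forall>i\<in>{1..m}. (X i \<omega> = 1) = (i \<in> T)}"
      unfolding S_def using True by auto
    also have "\<dots> \<in> events"
    proof (rule sets.sets_Collect_finite_All')
      fix i assume i: "i \<in> {1..m}"
      show "{\<omega>\<in>space M. (X i \<omega> = 1) = (i \<in> T)} \<in> events"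
      proof (cases "i \<in> T")
        case True thus ?thesis using ev1[of i] i by simp
      next
        case False
        have "{\<omega>\<in>space M. (X i \<omega> = 1) = (i \<in> T)} = space M - {\<omega>\<in>space M. X i \<omega> = 1}"
          using False by auto
        thus ?thesis using ev1[of i] i by auto
      qed
    qed (use m1 in auto)
    finally show ?thesis .
  qed
  have meas_eq: "measure M {\<omega> \<in> space M. Psi N c X \<omega> \<le> y} = Ex p m (\<lambda>T. if F T \<le> y then 1 else 0)" for y
  proof -
    let ?P = "{T\<in>Pow {1..m}. F T \<le> y}"
    have "{\<omega> \<in> space M. Psi N c X \<omega> \<le> y} = (\<Union>T\<in>?P. {\<omega>\<in>space M. S \<omega> = T})"
      using Psi_eq by (auto simp: S_def)
    hence "measure M {\<omega> \<in> space M. Psi N c X \<omega> \<le> y} = (\<Sum>T\<in>?P. measure M {\<omega>\<in>space M. S \<omega> = T})"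
    proof -
      have "measure M (\<Union>T\<in>?P. {\<omega>\<in>space M. S \<omega> = T}) = (\<Sum>T\<in>?P. measure M {\<omega>\<in>space M. S \<omega> = T})"
        using evT by (intro measure_finite_Union) (auto simp: disjoint_family_on_def emeasure_finite)
      thus ?thesis using \<open>{\<omega> \<in> space M. Psi N c X \<omega> \<le> y} = _\<close> by simp
    qed
    also have "\<dots> = (\<Sum>T\<in>?P. wt p m T)"
      using config_prob[OF ind v01 pr _ m1] by (intro sum.cong) (auto simp: S_def)
    also have "\<dots> = Ex p m (\<lambda>T. if T \<in> {T. F T \<le> y} then 1 else 0)"
      by (subst Ex_ind_le) simp
    finally show ?thesis by simp
  qed

  have EF: "Ex p m F = p ^ N * C"
  proof -
    have "Ex p m F = (\<Sum>\<alpha>\<in>A. Ex p m (\<lambda>T. a \<alpha> * (if \<alpha> \<subseteq> T then 1 else 0)))"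
      unfolding F_def by (rule Ex_sum)
    also have "\<dots> = (\<Sum>\<alpha>\<in>A. a \<alpha> * p ^ N)"
      by (intro sum.cong refl) (simp add: Ex_cmult Ex_ind[OF Asub] Aprops)
    also have "\<dots> = p ^ N * C" by (simp add: C_eq sum_distrib_right mult.commute)
    finally show ?thesis .
  qed

  have bd: "\<bar>F (insert i T) - F T\<bar> \<le> d i" if "i \<notin> T" for i T
  proof -
    have "F (insert i T) - F T = (\<Sum>\<alpha>\<in>A. a \<alpha> * ((if \<alpha> \<subseteq> insert i T then 1 else 0) - (if \<alpha> \<subseteq> T then 1 else 0)))"
      unfolding F_def by (simp add: sum_subtractf[symmetric] algebra_simps)
    moreover have "0 \<le> (\<Sum>\<alpha>\<in>A. a \<alpha> * ((if \<alpha> \<subseteq> insert i T then 1 else 0) - (if \<alpha> \<subseteq> T then 1 else 0)))"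
      by (intro sum_nonneg mult_nonneg_nonneg a_nn) auto
    moreover have "(\<Sum>\<alpha>\<in>A. a \<alpha> * ((if \<alpha> \<subseteq> insert i T then 1 else 0) - (if \<alpha> \<subseteq> T then 1 else 0)))
        \<le> (\<Sum>\<alpha>\<in>A. if i \<in> \<alpha> then a \<alpha> else 0)"
    proof (intro sum_mono)
      fix \<alpha> show "a \<alpha> * ((if \<alpha> \<subseteq> insert i T then 1 else 0) - (if \<alpha> \<subseteq> T then 1 else 0))
          \<le> (if i \<in> \<alpha> then a \<alpha> else 0)"
        using that a_nn[of \<alpha>] by (cases "i \<in> \<alpha>") (auto simp: subset_insert)
    qed
    moreover have "(\<Sum>\<alpha>\<in>A. if i \<in> \<alpha> then a \<alpha> else 0) = d i"
      unfolding d_def using finA by (simp add: sum.inter_filter)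
    ultimately show ?thesis by simp
  qed
  define D where "D = (\<Sum>i\<in>{1..m}. (d i)\<^sup>2)"
  have Dpos: "D > 0"
  proof -
    have "(d n0)\<^sup>2 \<le> D" unfolding D_def using n0m
      by (intro member_le_sum) auto
    moreover have "(d n0)\<^sup>2 > 0" using dn0 by simp
    ultimately show ?thesis by linarith
  qed
  have sumd: "(\<Sum>i\<in>{1..m}. d i) = real N * C"
  proof -
    have "(\<Sum>i\<in>{1..m}. d i) = (\<Sum>i\<in>{1..m}. \<Sum>\<alpha>\<in>A. if i \<in> \<alpha> then a \<alpha> else 0)"
      unfolding d_def using finA by (simp add: sum.inter_filter)
    also have "\<dots> = (\<Sum>\<alpha>\<in>A. \<Sum>i\<in>{1..m}. if i \<in> \<alpha> then a \<alpha> else 0)" by (rule sum.swap)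
    also have "\<dots> = (\<Sum>\<alpha>\<in>A. real N * a \<alpha>)"
    proof (intro sum.cong refl)
      fix \<alpha> assume al: "\<alpha> \<in> A"
      have "(\<Sum>i\<in>{1..m}. if i \<in> \<alpha> then a \<alpha> else 0) = (\<Sum>i\<in>{i\<in>{1..m}. i \<in> \<alpha>}. a \<alpha>)"
        by (rule sum.inter_filter[symmetric]) simp
      also have "{i\<in>{1..m}. i \<in> \<alpha>} = \<alpha>" using Asub[OF al] by auto
      finally show "(\<Sum>i\<in>{1..m}. if i \<in> \<alpha> then a \<alpha> else 0) = real N * a \<alpha>"
        using Aprops(2)[OF al] by simp
    qed
    finally show ?thesis by (simp add: C_eq sum_distrib_left)
  qed
  have D_le: "D \<le> \<delta> * (real N * C)"
  proof -
    have "D \<le> (\<Sum>i\<in>{1..m}. \<delta> * d i)" unfolding D_def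
      by (intro sum_mono) (simp add: power2_eq_square mult_right_mono d_le d_nn)
    thus ?thesis by (metis sum_distrib_left sumd)
  qed

  have rhs_ge: "exp (- (x\<^sup>2 / (\<delta> * C))) \<le> 2 * exp 3 / 9 * real N * exp (- (x\<^sup>2 / (\<delta> * C)))"
  proof -
    have "exp (1::real) \<ge> 2" using exp_ge_add_one_self[of 1] by simp
    hence "exp (1::real) ^ 3 \<ge> 2 ^ 3" by (intro power_mono) auto
    moreover have "exp (3::real) = exp 1 ^ 3" using exp_of_nat_mult[of 3 "1::real"] by simp
    ultimately have "exp (3::real) \<ge> 8" by simp
    moreover have "real N \<ge> 1" using assms(7) by simp
    moreover have "1 \<le> 2 * exp 3 / (9::real)" using \<open>exp (3::real) \<ge> 8\<close> by simp
    ultimately have "1 * 1 \<le> 2 * exp 3 / 9 * real N"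
      by (intro mult_mono) auto
    hence "2 * exp 3 / 9 * real N \<ge> 1" by simp
    hence "1 * exp (- (x\<^sup>2 / (\<delta> * C))) \<le> 2 * exp 3 / 9 * real N * exp (- (x\<^sup>2 / (\<delta> * C)))"
      by (intro mult_right_mono) auto
    thus ?thesis by simp
  qed
  show ?thesis
  proof (cases "x < 0")
    case True
    have "{\<omega> \<in> space M. Psi N c X \<omega> \<le> x} = {}"
    proof safe
      fix \<omega> assume "\<omega> \<in> space M" "Psi N c X \<omega> \<le> x"
      hence "F (S \<omega>) \<le> x" by (simp add: Psi_eq)
      with F_nn[of "S \<omega>"] True show "\<omega> \<in> {}" by linarith
    qed
    hence m0: "measure M {\<omega> \<in> space M. Psi N c X \<omega> \<le> x} = 0" by (simp only: measure_empty)
    have "0 \<le> 2 * exp 3 / 9 * real N * exp (- (x\<^sup>2 / (delta2 N c * cnorm2 N c)))" by simp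
    with m0 show ?thesis by linarith
  next
    case False
    define t where "t = p ^ N * C - x"
    have pN: "(p / 2) ^ N * C = p ^ N * C / 2 ^ N" by (simp add: power_divide)
    have "2 ^ N * x < p ^ N * C" using assms(10) pN C_def by (simp add: field_simps)
    hence t1: "t \<ge> (2 ^ N - 1) * x" by (simp add: t_def algebra_simps)
    have "real N + 1 \<le> 2 ^ N"
    proof -
      have "N < 2 ^ N" by (rule less_exp)
      hence "N + 1 \<le> (2::nat) ^ N" by linarith
      thus ?thesis by (metis of_nat_1 of_nat_add of_nat_le_iff of_nat_numeral of_nat_power)
    qed
    hence "real N * x \<le> (2 ^ N - 1) * x" using False by (intro mult_right_mono) auto
    hence tN: "t \<ge> real N * x" using t1 by simp
    have "real N * x \<ge> 0" using False by simp
    hence t0: "t \<ge> 0" using tN by linarith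
    have "measure M {\<omega> \<in> space M. Psi N c X \<omega> \<le> x} = Ex p m (\<lambda>T. if F T \<le> Ex p m F - t then 1 else 0)"
      unfolding meas_eq EF t_def by simp
    also have "\<dots> \<le> exp (- (2 * t\<^sup>2 / D))"
      by (rule chernoff[OF p01 bd D_def Dpos t0]) auto
    also have "\<dots> \<le> exp (- (x\<^sup>2 / (\<delta> * C)))"
    proof -
      have "x\<^sup>2 / (\<delta> * C) \<le> 2 * t\<^sup>2 / D"
      proof -
        have "(real N * x)\<^sup>2 \<le> t\<^sup>2" using tN False by (intro power_mono) auto
        have "x\<^sup>2 / (\<delta> * C) = 2 * (real N * x\<^sup>2) / (2 * (\<delta> * (real N * C)))"
          using assms(7) by (simp add: field_simps)
        also have "\<dots> \<le> 2 * (real N * x\<^sup>2) / (\<delta> * (real N * C))"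
          using \<delta>pos Cpos assms(7) by (intro divide_left_mono mult_pos_pos) auto
        also have "\<dots> \<le> 2 * t\<^sup>2 / (\<delta> * (real N * C))"
        proof -
          have "1 * (real N * x\<^sup>2) \<le> real N * (real N * x\<^sup>2)"
            using assms(7) by (intro mult_right_mono) auto
          also have "\<dots> = (real N * x)\<^sup>2" by (simp add: power2_eq_square)
          finally have "real N * x\<^sup>2 \<le> (real N * x)\<^sup>2" by simp
          also have "\<dots> \<le> t\<^sup>2" by fact
          finally show ?thesis using \<delta>pos Cpos assms(7) by (intro divide_right_mono) auto
        qed
        also have "\<dots> \<le> 2 * t\<^sup>2 / D"
          using Dpos D_le by (intro divide_left_mono) auto
        finally show ?thesis .
      qed
      thus ?thesis by simp
    qed
    also have "\<dots> \<le> 2 * exp 3 / 9 * real N * exp (- (x\<^sup>2 / (\<delta> * C)))" by (rule rhs_ge)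
    finally show ?thesis by (simp add: \<delta>_def C_def)
  qed
qed

end
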